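(* For every $n\ge 4$ and every integer $\ell\ge 1$, there is no perfect lattice code in $\mathcal{A}(n,n-2,\ell)$.
   Context: For integers $n\ge 1$, $0\le t\le n$, $\ell\ge 1$, let $\mathcal{S}(n,t,\ell)=\{\mathcal{E}=(\varepsilon_1,\dots,\varepsilon_n)\in\mathbb{Z}^n: 0\le\varepsilon_i\le\ell \text{ for all } i,\ w_H(\mathcal{E})\le t\}$, where $w_H$ is the number of nonzero coordinates. A lattice here is an integer lattice: the set of integer combinations of $n$ linearly independent vectors of $\mathbb{Z}^n$. $\mathcal{A}(n,t,\ell)$ is the set of lattices $\mathcal{L}\subseteq\mathbb{Z}^n$ that are packings with $\mathcal{S}(n,t,\ell)$, i.e. the translates $X+\mathcal{S}(n,t,\ell)$, $X\in\mathcal{L}$, are pairwise disjoint (lattice codes correcting $t$ asymmetric errors of limited magnitude $\ell$). Such $\mathcal{L}$ is perfect if these translates also cover $\mathbb{Z}^n$. *)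

theory Defs
  imports Complex_Main
begin

text \<open>Vectors of \<int>^n are represented as functions nat \<Rightarrow> int that vanish
  at all indices \<ge> n (coordinates are indexed 0..n-1).\<close>

definition zvec :: "nat \<Rightarrow> (nat \<Rightarrow> int) set" where
  "zvec n = {x. \<forall>i\<ge>n. x i = 0}"

definition vadd :: "(nat \<Rightarrow> int) \<Rightarrow> (nat \<Rightarrow> int) \<Rightarrow> (nat \<Rightarrow> int)" where
  "vadd x y = (\<lambda>j. x j + y j)"

definition hweight :: "nat \<Rightarrow> (nat \<Rightarrow> int) \<Rightarrow> nat" where
  "hweight n e = card {i. i < n \<and> e i \<noteq> 0}"

definition err_shape :: "nat \<Rightarrow> nat \<Rightarrow> nat \<Rightarrow> (nat \<Rightarrow> int) set" where
  "err_shape n t l = {e \<in> zvec n. (\<forall>i<n. 0 \<le> e i \<and> e i \<le> int l) \<and> hweight n e \<le> t}"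

definition lin_indep_int :: "nat \<Rightarrow> (nat \<Rightarrow> nat \<Rightarrow> int) \<Rightarrow> bool" where
  "lin_indep_int n b \<longleftrightarrow>
     (\<forall>c :: nat \<Rightarrow> real. (\<forall>j<n. (\<Sum>i<n. c i * real_of_int (b i j)) = 0) \<longrightarrow> (\<forall>i<n. c i = 0))"

definition int_lattice :: "nat \<Rightarrow> (nat \<Rightarrow> int) set \<Rightarrow> bool" where
  "int_lattice n L \<longleftrightarrow>
     (\<exists>b :: nat \<Rightarrow> nat \<Rightarrow> int. (\<forall>i<n. b i \<in> zvec n) \<and> lin_indep_int n b \<and>
        L = {(\<lambda>j. \<Sum>i<n. c i * b i j) | c :: nat \<Rightarrow> int. True})"

definition is_packing :: "(nat \<Rightarrow> int) set \<Rightarrow> (nat \<Rightarrow> int) set \<Rightarrow> bool" where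
  "is_packing L S \<longleftrightarrow>
     (\<forall>X\<in>L. \<forall>Y\<in>L. X \<noteq> Y \<longrightarrow> (vadd X ` S) \<inter> (vadd Y ` S) = {})"

definition lattice_codes :: "nat \<Rightarrow> nat \<Rightarrow> nat \<Rightarrow> (nat \<Rightarrow> int) set set" where
  "lattice_codes n t l = {L. int_lattice n L \<and> is_packing L (err_shape n t l)}"

definition is_perfect :: "nat \<Rightarrow> nat \<Rightarrow> nat \<Rightarrow> (nat \<Rightarrow> int) set \<Rightarrow> bool" where
  "is_perfect n t l L \<longleftrightarrow> (\<forall>z\<in>zvec n. \<exists>X\<in>L. z \<in> vadd X ` err_shape n t l)"

end

theory Submission
  imports Defs
begin

lemma lat_add:
  assumes "int_lattice n L" "X \<in> L" "Y \<in> L"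
  shows "(\<lambda>j. X j + Y j) \<in> L"
proof -
  from assms(1) obtain b where L: "L = {(\<lambda>j. \<Sum>i<n. c i * b i j) | c :: nat \<Rightarrow> int. True}"
    unfolding int_lattice_def by blast
  from assms(2) L obtain c where c: "X = (\<lambda>j. \<Sum>i<n. c i * b i j)" by blast
  from assms(3) L obtain c' where c': "Y = (\<lambda>j. \<Sum>i<n. c' i * b i j)" by blast
  have "(\<lambda>j. X j + Y j) = (\<lambda>j. \<Sum>i<n. (c i + c' i) * b i j)"
    by (simp add: c c' sum.distrib[symmetric] algebra_simps)
  thus ?thesis unfolding L by (intro CollectI exI[where x="\<lambda>i. c i + c' i"]) simp
qed

lemma lat_neg:
  assumes "int_lattice n L" "X \<in> L"
  shows "(\<lambda>j. - X j) \<in> L"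
proof -
  from assms(1) obtain b where L: "L = {(\<lambda>j. \<Sum>i<n. c i * b i j) | c :: nat \<Rightarrow> int. True}"
    unfolding int_lattice_def by blast
  from assms(2) L obtain c where c: "X = (\<lambda>j. \<Sum>i<n. c i * b i j)" by blast
  have "(\<lambda>j. - X j) = (\<lambda>j. \<Sum>i<n. (- c i) * b i j)"
    by (simp add: c sum_negf[symmetric])
  thus ?thesis unfolding L by (intro CollectI exI[where x="\<lambda>i. - c i"]) simp
qed

lemma lat_zero:
  assumes "int_lattice n L"
  shows "(\<lambda>j. 0) \<in> L"
proof -
  from assms(1) obtain b where L: "L = {(\<lambda>j. \<Sum>i<n. c i * b i j) | c :: nat \<Rightarrow> int. True}"
    unfolding int_lattice_def by blast
  have "(\<lambda>j::nat. 0::int) = (\<lambda>j. \<Sum>i<n. (\<lambda>_. 0) i * b i j)" by simp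
  thus ?thesis unfolding L by (intro CollectI exI[where x="\<lambda>i. 0"]) simp
qed

lemma lat_zvec:
  assumes "int_lattice n L" "X \<in> L" "j \<ge> n"
  shows "X j = 0"
proof -
  from assms(1) obtain b where b: "\<forall>i<n. b i \<in> zvec n" and
    L: "L = {(\<lambda>j. \<Sum>i<n. c i * b i j) | c :: nat \<Rightarrow> int. True}"
    unfolding int_lattice_def by blast
  from assms(2) L obtain c where c: "X = (\<lambda>j. \<Sum>i<n. c i * b i j)" by blast
  have "\<forall>i<n. b i j = 0" using b assms(3) by (auto simp: zvec_def)
  thus ?thesis by (simp add: c)
qed

lemma card_sub2:
  assumes "A \<subseteq> {..<n} - {a,b}" "a < n" "b < n" "a \<noteq> b"
  shows "card A \<le> n - 2"
proof -
  have "card A \<le> card ({..<n} - {a,b})" by (rule card_mono) (use assms in auto)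
  also have "\<dots> = n - 2" using assms by (simp add: card_Diff_subset)
  finally show ?thesis .
qed

lemma card_small:
  assumes "A \<subseteq> {a,b}" "n \<ge> 4"
  shows "card A \<le> n - 2"
proof -
  have "card A \<le> card {a,b}" by (rule card_mono) (use assms in auto)
  also have "\<dots> \<le> 2" by (simp add: card_insert_le_m1)
  finally show ?thesis using assms by linarith
qed

locale ctx =
  fixes n l :: nat and L :: "(nat \<Rightarrow> int) set"
  assumes n4: "n \<ge> 4" and l1: "l \<ge> 1"
    and lat: "int_lattice n L"
    and pack: "is_packing L (err_shape n (n-2) l)"
    and perf: "is_perfect n (n-2) l L"
begin

abbreviation "S \<equiv> err_shape n (n-2) l"

lemma S_props:
  assumes "s \<in> S"
  shows "\<And>j. j < n \<Longrightarrow> 0 \<le> s j" "\<And>j. j < n \<Longrightarrow> s j \<le> int l" "\<And>j. j \<ge> n \<Longrightarrow> s j = 0"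
    "card {j. j < n \<and> s j \<noteq> 0} \<le> n - 2"
  using assms by (auto simp: err_shape_def zvec_def hweight_def)

lemma card_supp:
  assumes "s \<in> S" "A \<subseteq> {j. j < n \<and> s j \<noteq> 0}"
  shows "card A \<le> n - 2"
proof -
  have "card A \<le> card {j. j < n \<and> s j \<noteq> 0}" by (rule card_mono) (use assms in auto)
  thus ?thesis using S_props(4)[OF assms(1)] by linarith
qed

lemma exists_zero:
  assumes "s \<in> S" "a < n"
  shows "\<exists>j<n. j \<noteq> a \<and> s j = 0"
proof (rule ccontr)
  assume "\<not> ?thesis"
  hence "{..<n} - {a} \<subseteq> {j. j < n \<and> s j \<noteq> 0}" by auto
  hence "card ({..<n} - {a}) \<le> n - 2" using card_supp[OF assms(1)] by blast
  moreover have "card ({..<n} - {a}) = n - 1" using assms(2) by simp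
  ultimately show False using n4 by linarith
qed

lemma cover:
  assumes "z \<in> zvec n"
  obtains X s where "X \<in> L" "s \<in> S" "\<And>j. z j = X j + s j"
proof -
  from perf assms obtain X where X: "X \<in> L" "z \<in> vadd X ` S"
    unfolding is_perfect_def by blast
  then obtain s where s: "s \<in> S" "z = vadd X s" by blast
  show ?thesis by (rule that[OF X(1) s(1)]) (simp add: s(2) vadd_def)
qed

lemma Dlemma:
  assumes "d \<in> L" "d t \<noteq> 0" "\<And>j. j < n \<Longrightarrow> \<bar>d j\<bar> \<le> int l"
    "card {j. j < n \<and> d j > 0} \<le> n - 2" "card {j. j < n \<and> d j < 0} \<le> n - 2"
  shows False
proof -
  define v where "v = (\<lambda>j. max (d j) 0)"
  define u where "u = (\<lambda>j. max (- d j) 0)"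
  have dz: "\<And>j. j \<ge> n \<Longrightarrow> d j = 0" using lat_zvec[OF lat assms(1)] by blast
  have "{j. j < n \<and> v j \<noteq> 0} = {j. j < n \<and> d j > 0}" by (auto simp: v_def)
  hence vS: "v \<in> S" using assms(3,4) dz
    by (auto simp: err_shape_def zvec_def hweight_def v_def abs_le_iff)
  have "{j. j < n \<and> u j \<noteq> 0} = {j. j < n \<and> d j < 0}" by (auto simp: u_def)
  hence uS: "u \<in> S" using assms(3,5) dz
    by (auto simp: err_shape_def zvec_def hweight_def u_def abs_le_iff)
  have eq: "vadd d u = vadd (\<lambda>j. 0) v" by (auto simp: vadd_def u_def v_def)
  have ne: "d \<noteq> (\<lambda>j. 0)" using assms(2) by auto
  from pack have "vadd d ` S \<inter> vadd (\<lambda>j. 0) ` S = {}"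
    unfolding is_packing_def using assms(1) lat_zero[OF lat] ne by blast
  thus False using eq uS vS by blast
qed

definition one :: "nat \<Rightarrow> int" where "one = (\<lambda>j. if j < n then 1 else 0)"
definition V :: "int \<Rightarrow> nat \<Rightarrow> nat \<Rightarrow> int" where
  "V m i = (\<lambda>j. one j - (if j = i then m else 0))"

lemma one_zvec: "z \<in> zvec n \<longleftrightarrow> (\<forall>j\<ge>n. z j = 0)" by (simp add: zvec_def)

lemma S1:
  assumes "i < n"
  shows "\<exists>m. 1 \<le> m \<and> m \<le> int l + 1 \<and> V m i \<in> L"
proof -
  define z where "z = (\<lambda>j. if j < n then (if j = i then 0 else 1) else (0::int))"
  have "z \<in> zvec n" by (simp add: zvec_def z_def)
  then obtain X s where X: "X \<in> L" and s: "s \<in> S" and zs: "\<And>j. z j = X j + s j"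
    using cover by blast
  note sp = S_props[OF s]
  have s0: "\<forall>j<n. j \<noteq> i \<longrightarrow> s j = 0"
  proof (rule ccontr)
    assume "\<not> ?thesis"
    then obtain j where j: "j < n" "j \<noteq> i" "s j \<noteq> 0" by blast
    have Xt: "\<And>t. X t = z t - s t" using zs by (metis add_diff_cancel_right')
    have "\<exists>t. X t \<noteq> 0"
    proof (rule ccontr)
      assume "\<not> ?thesis"
      hence "\<forall>t. s t = z t" using zs by simp
      hence "{..<n} - {i} \<subseteq> {j. j < n \<and> s j \<noteq> 0}" by (auto simp: z_def)
      hence "card ({..<n} - {i}) \<le> n - 2" by (rule card_supp[OF s])
      moreover have "card ({..<n} - {i}) = n - 1" using assms by simp
      ultimately show False using n4 by linarith
    qed
    then obtain t where t: "X t \<noteq> 0" by blast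
    show False
    proof (rule Dlemma[OF X t])
      fix t assume "t < n" thus "\<bar>X t\<bar> \<le> int l" using sp(1,2)[of t] l1 by (auto simp: Xt z_def)
    next
      have "{t. t < n \<and> X t > 0} \<subseteq> {..<n} - {i, j}"
      proof
        fix t assume "t \<in> {t. t < n \<and> X t > 0}"
        thus "t \<in> {..<n} - {i, j}" using sp(1,2)[of t] j by (auto simp: Xt z_def split: if_splits)
      qed
      thus "card {t. t < n \<and> X t > 0} \<le> n - 2" by (rule card_sub2) (use j assms in auto)
    next
      have "{t. t < n \<and> X t < 0} \<subseteq> {j. j < n \<and> s j \<noteq> 0}"
        by (auto simp: Xt z_def split: if_splits)
      thus "card {t. t < n \<and> X t < 0} \<le> n - 2" by (rule card_supp[OF s])
    qed
  qed
  have "X = V (1 + s i) i"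
  proof
    fix j
    have "X j = z j - s j" using zs by (metis add_diff_cancel_right')
    thus "X j = V (1 + s i) i j" using s0 sp(3) assms
      by (auto simp: V_def one_def z_def)
  qed
  thus ?thesis using X sp(1,2)[OF assms] by (intro exI[of _ "1 + s i"]) auto
qed

lemma S2:
  assumes "i < n" "j < n" "i \<noteq> j" "V a i \<in> L" "V b j \<in> L" "1 \<le> a" "a \<le> int l" "1 \<le> b" "b \<le> int l"
  shows False
proof -
  define d where "d = (\<lambda>t. V a i t + - V b j t)"
  have dL: "d \<in> L" unfolding d_def by (intro lat_add[OF lat] lat_neg[OF lat] assms)
  have dt: "\<And>t. d t = (if t = j then b else 0) - (if t = i then a else 0)"
    by (simp add: d_def V_def)
  have "d j \<noteq> 0" using assms by (simp add: dt)
  show False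
  proof (rule Dlemma[OF dL \<open>d j \<noteq> 0\<close>])
    fix t show "\<bar>d t\<bar> \<le> int l" using assms by (auto simp: dt)
  next
    have "{t. t < n \<and> d t > 0} \<subseteq> {j, j}" using assms by (auto simp: dt split: if_splits)
    thus "card {t. t < n \<and> d t > 0} \<le> n - 2" by (rule card_small[OF _ n4])
  next
    have "{t. t < n \<and> d t < 0} \<subseteq> {i, i}" using assms by (auto simp: dt split: if_splits)
    thus "card {t. t < n \<and> d t < 0} \<le> n - 2" by (rule card_small[OF _ n4])
  qed
qed

lemma S3:
  assumes "l \<ge> 2" "i < n" "j < n" "i \<noteq> j" "V (int l + 1) i \<in> L" "V (int l + 1) j \<in> L"
  shows False
proof -
  define d where "d = (\<lambda>t. - (V (int l + 1) i t + V (int l + 1) j t))"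
  have dL: "d \<in> L" unfolding d_def by (intro lat_add[OF lat] lat_neg[OF lat] assms)
  have dt: "\<And>t. d t = - 2 * one t + (if t = i then int l + 1 else 0) + (if t = j then int l + 1 else 0)"
    by (simp add: d_def V_def)
  have "d i \<noteq> 0" using assms by (simp add: dt one_def)
  show False
  proof (rule Dlemma[OF dL \<open>d i \<noteq> 0\<close>])
    fix t show "t < n \<Longrightarrow> \<bar>d t\<bar> \<le> int l" using assms by (auto simp: dt one_def)
  next
    have "{t. t < n \<and> d t > 0} \<subseteq> {i, j}" using assms by (auto simp: dt one_def split: if_splits)
    thus "card {t. t < n \<and> d t > 0} \<le> n - 2" by (rule card_small[OF _ n4])
  next
    have "{t. t < n \<and> d t < 0} \<subseteq> {..<n} - {i, j}" using assms by (auto simp: dt one_def split: if_splits)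
    thus "card {t. t < n \<and> d t < 0} \<le> n - 2" by (rule card_sub2) (use assms(2,3,4) in auto)
  qed
qed

lemma caseA:
  assumes "l = 1" "k < n" "V 1 k \<in> L" "\<And>i. i < n \<Longrightarrow> i \<noteq> k \<Longrightarrow> V 2 i \<in> L"
  shows False
proof -
  define z where "z = (\<lambda>j. if j = k then -1 else (0::int))"
  have "z \<in> zvec n" using assms(2) by (simp add: zvec_def z_def)
  then obtain X s where X: "X \<in> L" and s: "s \<in> S" and zs: "\<And>j. z j = X j + s j"
    using cover by blast
  note sp = S_props[OF s]
  have Xt: "\<And>t. X t = z t - s t" using zs by (metis add_diff_cancel_right')
  show False
  proof (cases "s k = 0")
    case True
    obtain j where j: "j < n" "j \<noteq> k" "s j = 0" using exists_zero[OF s assms(2)] by blast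
    define d where "d = (\<lambda>t. - X t + - V 2 j t)"
    have dL: "d \<in> L" unfolding d_def by (intro lat_add[OF lat] lat_neg[OF lat] X assms(4) j)
    have dt: "\<And>t. d t = - z t + s t - one t + (if t = j then 2 else 0)"
      by (simp add: d_def V_def Xt)
    have "d j \<noteq> 0" using j by (simp add: dt one_def z_def)
    show False
    proof (rule Dlemma[OF dL \<open>d j \<noteq> 0\<close>])
      fix t assume "t < n" thus "\<bar>d t\<bar> \<le> int l"
        using sp(1,2)[of t] assms(1) True j by (auto simp: dt one_def z_def)
    next
      have "{t. t < n \<and> d t > 0} \<subseteq> {j, j}"
      proof
        fix t assume "t \<in> {t. t < n \<and> d t > 0}"
        thus "t \<in> {j, j}" using sp(1,2)[of t] assms(1) True j by (auto simp: dt one_def z_def split: if_splits)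
      qed
      thus "card {t. t < n \<and> d t > 0} \<le> n - 2" by (rule card_small[OF _ n4])
    next
      have "{t. t < n \<and> d t < 0} \<subseteq> {..<n} - {j, k}"
      proof
        fix t assume "t \<in> {t. t < n \<and> d t < 0}"
        thus "t \<in> {..<n} - {j, k}" using sp(1,2)[of t] assms(1) True j by (auto simp: dt one_def z_def split: if_splits)
      qed
      thus "card {t. t < n \<and> d t < 0} \<le> n - 2" by (rule card_sub2) (use j assms(2) in auto)
    qed
  next
    case False
    obtain i where i: "i < n" "i \<noteq> k" "s i = 0" using exists_zero[OF s assms(2)] by blast
    define d where "d = (\<lambda>t. X t + V 2 i t)"
    have dL: "d \<in> L" unfolding d_def by (intro lat_add[OF lat] X assms(4) i)
    have dt: "\<And>t. d t = z t - s t + one t - (if t = i then 2 else 0)"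
      by (simp add: d_def V_def Xt)
    have sk: "s k = 1" using False sp(1,2)[OF assms(2)] assms(1) by simp
    have "d k \<noteq> 0" using i sk assms(2) by (simp add: dt one_def z_def)
    show False
    proof (rule Dlemma[OF dL \<open>d k \<noteq> 0\<close>])
      fix t assume "t < n" thus "\<bar>d t\<bar> \<le> int l"
        using sp(1,2)[of t] assms(1) sk i by (auto simp: dt one_def z_def)
    next
      have "{t. t < n \<and> d t > 0} \<subseteq> {..<n} - {i, k}"
      proof
        fix t assume "t \<in> {t. t < n \<and> d t > 0}"
        thus "t \<in> {..<n} - {i, k}" using sp(1,2)[of t] assms(1) sk i by (auto simp: dt one_def z_def split: if_splits)
      qed
      thus "card {t. t < n \<and> d t > 0} \<le> n - 2" by (rule card_sub2) (use i assms(2) in auto)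
    next
      have "{t. t < n \<and> d t < 0} \<subseteq> {i, k}"
      proof
        fix t assume "t \<in> {t. t < n \<and> d t < 0}"
        thus "t \<in> {i, k}" using sp(1,2)[of t] assms(1) sk i by (auto simp: dt one_def z_def split: if_splits)
      qed
      thus "card {t. t < n \<and> d t < 0} \<le> n - 2" by (rule card_small[OF _ n4])
    qed
  qed
qed

lemma caseB:
  assumes "l = 1" "\<And>i. i < n \<Longrightarrow> V 2 i \<in> L"
  shows False
proof -
  have "one \<in> zvec n" by (simp add: zvec_def one_def)
  then obtain X s where X: "X \<in> L" and s: "s \<in> S" and zs: "\<And>j. one j = X j + s j"
    using cover by blast
  note sp = S_props[OF s]
  have Xt: "\<And>t. X t = one t - s t" using zs by (metis add_diff_cancel_right')
  show False
  proof (cases "\<exists>t<n. s t \<noteq> 0")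
    case True
    then obtain t where t: "t < n" "s t \<noteq> 0" by blast
    have st: "s t = 1" using t sp(1,2)[OF t(1)] assms(1) by simp
    define d where "d = (\<lambda>u. X u + - V 2 t u)"
    have dL: "d \<in> L" unfolding d_def by (intro lat_add[OF lat] lat_neg[OF lat] X assms(2) t)
    have dt: "\<And>u. d u = - s u + (if u = t then 2 else 0)"
      by (simp add: d_def V_def Xt)
    have "d t \<noteq> 0" using st by (simp add: dt)
    show False
    proof (rule Dlemma[OF dL \<open>d t \<noteq> 0\<close>])
      fix u assume "u < n" thus "\<bar>d u\<bar> \<le> int l"
        using sp(1,2)[of u] assms(1) st by (auto simp: dt)
    next
      have "{u. u < n \<and> d u > 0} \<subseteq> {t, t}"
      proof
        fix u assume "u \<in> {u. u < n \<and> d u > 0}"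
        thus "u \<in> {t, t}" using sp(1,2)[of u] assms(1) st by (auto simp: dt split: if_splits)
      qed
      thus "card {u. u < n \<and> d u > 0} \<le> n - 2" by (rule card_small[OF _ n4])
    next
      have "{u. u < n \<and> d u < 0} \<subseteq> {u. u < n \<and> s u \<noteq> 0}"
      proof
        fix u assume "u \<in> {u. u < n \<and> d u < 0}"
        thus "u \<in> {u. u < n \<and> s u \<noteq> 0}" using sp(1,2)[of u] assms(1) st by (auto simp: dt split: if_splits)
      qed
      thus "card {u. u < n \<and> d u < 0} \<le> n - 2" by (rule card_supp[OF s])
    qed
  next
    case False
    have s0: "\<And>u. s u = 0" using False sp(3) by (metis not_le)
    have n01: "0 < n" "1 < n" using n4 by auto
    define d where "d = (\<lambda>u. V 2 0 u + V 2 1 u + - X u)"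
    have dL: "d \<in> L" unfolding d_def by (intro lat_add[OF lat] lat_neg[OF lat] X assms(2) n01)
    have dt: "\<And>u. d u = one u - (if u = 0 then 2 else 0) - (if u = 1 then 2 else 0)"
      by (simp add: d_def V_def Xt s0)
    have "d 0 \<noteq> 0" using n01 by (simp add: dt one_def)
    show False
    proof (rule Dlemma[OF dL \<open>d 0 \<noteq> 0\<close>])
      fix u assume "u < n" thus "\<bar>d u\<bar> \<le> int l"
        using assms(1) by (auto simp: dt one_def)
    next
      have "{u. u < n \<and> d u > 0} \<subseteq> {..<n} - {0, 1}"
        by (auto simp: dt one_def split: if_splits)
      thus "card {u. u < n \<and> d u > 0} \<le> n - 2" by (rule card_sub2) (use n01 in auto)
    next
      have "{u. u < n \<and> d u < 0} \<subseteq> {0, 1}"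
        by (auto simp: dt one_def split: if_splits)
      thus "card {u. u < n \<and> d u < 0} \<le> n - 2" by (rule card_small[OF _ n4])
    qed
  qed
qed

lemma contra: False
proof -
  have "\<forall>i. \<exists>m. i < n \<longrightarrow> 1 \<le> m \<and> m \<le> int l + 1 \<and> V m i \<in> L" using S1 by blast
  then obtain M where M: "\<And>i. i < n \<Longrightarrow> 1 \<le> M i \<and> M i \<le> int l + 1 \<and> V (M i) i \<in> L"
    by metis
  have h: "\<And>i j. i < n \<Longrightarrow> j < n \<Longrightarrow> i \<noteq> j \<Longrightarrow> M i \<le> int l \<Longrightarrow> M j = int l + 1"
  proof (rule ccontr)
    fix i j assume a: "i < n" "j < n" "i \<noteq> j" "M i \<le> int l" "M j \<noteq> int l + 1"
    show False using S2[OF a(1-3)] M[OF a(1)] M[OF a(2)] a(4,5) by fastforce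
  qed
  show False
  proof (cases "l \<ge> 2")
    case True
    have n012: "0 < n" "1 < n" "2 < n" using n4 by auto
    have VL: "\<And>i. i < n \<Longrightarrow> M i = int l + 1 \<Longrightarrow> V (int l + 1) i \<in> L"
      using M by metis
    show False
    proof (cases "M 0 \<le> int l")
      case True
      have "M 1 = int l + 1" "M 2 = int l + 1" using h[OF n012(1,2)] h[OF n012(1,3)] True by auto
      thus False using S3[OF \<open>l \<ge> 2\<close> n012(2,3)] VL n012 by simp
    next
      case F0: False
      hence m0: "M 0 = int l + 1" using M[OF n012(1)] by simp
      show False
      proof (cases "M 1 \<le> int l")
        case True
        have "M 2 = int l + 1" using h[OF n012(2,3)] True by auto
        thus False using m0 S3[OF \<open>l \<ge> 2\<close> n012(1,3)] VL n012 by simp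
      next
        case False
        hence "M 1 = int l + 1" using M[OF n012(2)] by simp
        thus False using m0 S3[OF \<open>l \<ge> 2\<close> n012(1,2)] VL n012 by simp
      qed
    qed
  next
    case False
    hence l: "l = 1" using l1 by simp
    show False
    proof (cases "\<exists>k<n. M k = 1")
      case True
      then obtain k where k: "k < n" "M k = 1" by blast
      have "\<And>i. i < n \<Longrightarrow> i \<noteq> k \<Longrightarrow> V 2 i \<in> L"
      proof -
        fix i assume "i < n" "i \<noteq> k"
        hence "M i = 2" using h[OF k(1) \<open>i < n\<close>] k l by auto
        thus "V 2 i \<in> L" using M[OF \<open>i < n\<close>] by simp
      qed
      thus False using caseA[OF l k(1)] M[OF k(1)] k by simp
    next
      case False
      have "\<And>i. i < n \<Longrightarrow> V 2 i \<in> L"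
      proof -
        fix i assume "i < n"
        hence "M i = 2" using False M[OF \<open>i < n\<close>] l by force
        thus "V 2 i \<in> L" using M[OF \<open>i < n\<close>] by simp
      qed
      thus False using caseB[OF l] by blast
    qed
  qed
qed

end

theorem mainTheorem5:
  fixes n l :: nat
  assumes "n \<ge> 4" and "l \<ge> 1"
  shows "\<not> (\<exists>L \<in> lattice_codes n (n - 2) l. is_perfect n (n - 2) l L)"
proof
  assume "\<exists>L \<in> lattice_codes n (n - 2) l. is_perfect n (n - 2) l L"
  then obtain L where "int_lattice n L" "is_packing L (err_shape n (n - 2) l)"
    "is_perfect n (n - 2) l L" unfolding lattice_codes_def by blast
  then interpret ctx n l L using assms by unfold_locales auto
  show False by (rule contra)
qed

end
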